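(* For $\alpha>0$ and $x>0$, $$G\Bigl(x;\frac1\alpha\Bigr)=\frac{G(\alpha x;\alpha)}{G(\alpha;\alpha)^x}\,\alpha^{\frac{(x-1)(\alpha x-2)}{2}} .$$
   Context: For $\alpha>0$, $\operatorname{Re}x>0$, $G(x;\alpha)$ is defined by $\ln G(x;\alpha)=\int_0^\infty\frac{e^{-\alpha u}}{u}\bigl\{\frac{(x-1)(x-2\alpha)}{2\alpha}-\frac{x-1}{1-e^{-\alpha u}}+\frac{e^{-(1-\alpha)u}-e^{-(x-\alpha)u}}{(1-e^{-u})(1-e^{-\alpha u})}\bigr\}du$; it satisfies $G(1;\alpha)=1$, $G(x+1;\alpha)=\Gamma(x/\alpha)G(x;\alpha)$, and $G(\alpha;\alpha)=\alpha^{-1/2}(2\pi)^{(\alpha-1)/2}$. *)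

theory Defs
  imports "HOL-Analysis.Analysis"
begin

definition lnG :: "real \<Rightarrow> real \<Rightarrow> real" where
  "lnG x \<alpha> = integral {0<..} (\<lambda>u. exp (-\<alpha>*u) / u *
      ((x - 1) * (x - 2*\<alpha>) / (2*\<alpha>) - (x - 1) / (1 - exp (-\<alpha>*u))
       + (exp (-(1-\<alpha>)*u) - exp (-(x-\<alpha>)*u)) / ((1 - exp (-u)) * (1 - exp (-\<alpha>*u)))))"

definition G :: "real \<Rightarrow> real \<Rightarrow> real" where
  "G x \<alpha> = exp (lnG x \<alpha>)"

end

theory Submission
  imports Defs
begin


lemma abs_int_exp_bound:
  fixes f :: "real \<Rightarrow> real"
  assumes cont: "continuous_on S f" and S: "S \<in> sets lebesgue" and sub: "S \<subseteq> {c..}"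
    and m: "m > 0" and bd: "\<And>t. t \<in> S \<Longrightarrow> \<bar>f t\<bar> \<le> K * exp (-m*t)"
  shows "f absolutely_integrable_on S"
proof (rule measurable_bounded_by_integrable_imp_absolutely_integrable)
  show "f \<in> borel_measurable (lebesgue_on S)"
    using cont S by (rule continuous_imp_measurable_on_sets_lebesgue)
  show "S \<in> sets lebesgue" by fact
  show "\<And>x. x \<in> S \<Longrightarrow> norm (f x) \<le> K * exp (-m*x)" using bd by simp
  show "(\<lambda>t. K * exp (-m*t)) integrable_on S"
  proof (cases "S = {}")
    case True then show ?thesis by (simp add: integrable_on_empty)
  next
    case False
    then obtain t0 where "t0 \<in> S" by blast
    with bd have "0 \<le> K * exp (-m*t0)" by (meson abs_ge_zero order_trans)
    hence K: "K \<ge> 0" by (simp add: zero_le_mult_iff)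
    have "(\<lambda>t. K * exp (-m*t)) integrable_on {c..}"
      using integrable_on_exp_minus_to_infinity[OF m, of c] by (rule integrable_on_mult_right)
    hence "(\<lambda>t. K * exp (-m*t)) absolutely_integrable_on {c..}"
      using K by (intro nonnegative_absolutely_integrable_1) auto
    hence "(\<lambda>t. K * exp (-m*t)) absolutely_integrable_on S"
      by (rule set_integrable_subset) (use S sub in auto)
    thus ?thesis using set_lebesgue_integral_eq_integral(1) by blast
  qed
qed



lemma taylor3:
  fixes l u :: real
  assumes "0 \<le> u" "u \<le> 1" "0 \<le> l"
  shows "\<bar>exp (-l*u) - (1 - l*u + (l*u)^2/2)\<bar> \<le> l^3 * exp l * u^3 / 6"
proof -
  obtain t where t: "\<bar>t\<bar> \<le> \<bar>-l*u\<bar>"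
    and e: "exp (-l*u) = (\<Sum>m<3. (-l*u) ^ m / fact m) + (exp t / fact 3) * (-l*u) ^ 3"
    using Maclaurin_exp_le[of "-l*u" 3] by blast
  have s: "(\<Sum>m<3. (-l*u) ^ m / fact m) = 1 - l*u + (l*u)^2/2"
    by (simp add: eval_nat_numeral fact_numeral power2_eq_square)
  have "l*u \<le> l" using assms by (simp add: mult_left_le)
  hence "t \<le> l" using t assms by auto
  hence et: "exp t \<le> exp l" by simp
  have "\<bar>exp (-l*u) - (1 - l*u + (l*u)^2/2)\<bar> = exp t / 6 * (l*u)^3"
    using e s assms by (simp add: fact_numeral power_minus_odd abs_mult)
  also have "\<dots> \<le> exp l / 6 * (l*u)^3"
    using et assms by (intro mult_right_mono) auto
  finally show ?thesis by (simp add: power_mult_distrib mult_ac)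
qed

lemma one_minus_exp_lower:
  fixes s :: real assumes "s \<ge> 0" shows "s * exp (-s) \<le> 1 - exp (-s)"
proof -
  have "1 + s \<le> exp s" by (rule exp_ge_add_one_self)
  hence "exp (-s) * (1 + s) \<le> exp (-s) * exp s" by (intro mult_left_mono) auto
  thus ?thesis by (simp add: exp_minus field_simps)
qed

lemma abs6: fixes a1 a2 a3 a4 a5 a6 :: real
  shows "\<bar>a1 - a2 + a3 + a4 + a5 - a6\<bar> \<le> \<bar>a1\<bar> + \<bar>a2\<bar> + \<bar>a3\<bar> + \<bar>a4\<bar> + \<bar>a5\<bar> + \<bar>a6\<bar>"
proof -
  have "\<bar>a1 - a2 + a3 + a4 + a5 - a6\<bar> \<le> \<bar>a1 - a2 + a3 + a4 + a5\<bar> + \<bar>a6\<bar>" by (rule abs_triangle_ineq4)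
  also have "\<bar>a1 - a2 + a3 + a4 + a5\<bar> \<le> \<bar>a1 - a2 + a3 + a4\<bar> + \<bar>a5\<bar>" by (rule abs_triangle_ineq)
  also have "\<bar>a1 - a2 + a3 + a4\<bar> \<le> \<bar>a1 - a2 + a3\<bar> + \<bar>a4\<bar>" by (rule abs_triangle_ineq)
  also have "\<bar>a1 - a2 + a3\<bar> \<le> \<bar>a1 - a2\<bar> + \<bar>a3\<bar>" by (rule abs_triangle_ineq)
  also have "\<bar>a1 - a2\<bar> \<le> \<bar>a1\<bar> + \<bar>a2\<bar>" by (rule abs_triangle_ineq4)
  finally show ?thesis by simp
qed



definition Pc :: "real \<Rightarrow> real \<Rightarrow> real" where "Pc x a = (x-1)*(x-2*a)/(2*a)"

definition Nf :: "real \<Rightarrow> real \<Rightarrow> real \<Rightarrow> real" where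
  "Nf x a u = (Pc x a - (x-1)) * exp (-a*u) - Pc x a * exp (-(2*a)*u) + (x-1-Pc x a) * exp (-(a+1)*u)
     + Pc x a * exp (-(2*a+1)*u) + 1 * exp (-1*u) - 1 * exp (-x*u)"

definition q3 :: "real \<Rightarrow> real \<Rightarrow> real" where "q3 l u = 1 - l*u + (l*u)^2/2"

definition Mc :: "real \<Rightarrow> real \<Rightarrow> real" where
  "Mc x a = (\<bar>Pc x a - (x-1)\<bar> * a^3 * exp a + \<bar>Pc x a\<bar> * (2*a)^3 * exp (2*a)
     + \<bar>x-1-Pc x a\<bar> * (a+1)^3 * exp (a+1) + \<bar>Pc x a\<bar> * (2*a+1)^3 * exp (2*a+1)
     + exp 1 + x^3 * exp x) / 6"

lemma Nf_taylor:
  assumes "a > 0"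
  shows "Nf x a u = (Pc x a - (x-1)) * (exp (-a*u) - q3 a u) - Pc x a * (exp (-(2*a)*u) - q3 (2*a) u)
     + (x-1-Pc x a) * (exp (-(a+1)*u) - q3 (a+1) u)
     + Pc x a * (exp (-(2*a+1)*u) - q3 (2*a+1) u) + 1 * (exp (-1*u) - q3 1 u) - 1 * (exp (-x*u) - q3 x u)"
proof -
  have h: "2*a*Pc x a = (x-1)*(x-2*a)" using assms unfolding Pc_def by simp
  have "(Pc x a - (x-1)) * q3 a u - Pc x a * q3 (2*a) u + (x-1-Pc x a) * q3 (a+1) u
     + Pc x a * q3 (2*a+1) u + 1 * q3 1 u - 1 * q3 x u = u^2/2 * (2*a*Pc x a - (x-1)*(x-2*a))"
    unfolding q3_def by (simp add: field_simps power2_eq_square)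
  hence "(Pc x a - (x-1)) * q3 a u - Pc x a * q3 (2*a) u + (x-1-Pc x a) * q3 (a+1) u
     + Pc x a * q3 (2*a+1) u + 1 * q3 1 u - 1 * q3 x u = 0" using h by simp
  thus ?thesis unfolding Nf_def by (simp add: algebra_simps)
qed

lemma Nf_small:
  assumes "a > 0" "x > 0" "0 \<le> u" "u \<le> 1"
  shows "\<bar>Nf x a u\<bar> \<le> Mc x a * u^3"
proof -
  have T: "\<bar>c * (exp (-l*u) - q3 l u)\<bar> \<le> \<bar>c\<bar> * l^3 * exp l * u^3 / 6" if "l \<ge> 0" for c l
    using taylor3[OF assms(3,4) that] mult_left_mono[OF taylor3[OF assms(3,4) that], of "\<bar>c\<bar>"]
    by (simp add: abs_mult q3_def mult_ac)
  have 1: "\<bar>(Pc x a - (x-1)) * (exp (-a*u) - q3 a u)\<bar> \<le> \<bar>Pc x a - (x-1)\<bar> * a^3 * exp a * u^3 / 6"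
    using T[of a "Pc x a - (x-1)"] assms by simp
  have 2: "\<bar>Pc x a * (exp (-(2*a)*u) - q3 (2*a) u)\<bar> \<le> \<bar>Pc x a\<bar> * (2*a)^3 * exp (2*a) * u^3 / 6"
    using T[of "2*a" "Pc x a"] assms by simp
  have 3: "\<bar>(x-1-Pc x a) * (exp (-(a+1)*u) - q3 (a+1) u)\<bar> \<le> \<bar>x-1-Pc x a\<bar> * (a+1)^3 * exp (a+1) * u^3 / 6"
    using T[of "a+1" "x-1-Pc x a"] assms by simp
  have 4: "\<bar>Pc x a * (exp (-(2*a+1)*u) - q3 (2*a+1) u)\<bar> \<le> \<bar>Pc x a\<bar> * (2*a+1)^3 * exp (2*a+1) * u^3 / 6"
    using T[of "2*a+1" "Pc x a"] assms by simp
  have 5: "\<bar>1 * (exp (-1*u) - q3 1 u)\<bar> \<le> \<bar>1\<bar> * 1^3 * exp 1 * u^3 / 6"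
    using T[of 1 1] by simp
  have 6: "\<bar>1 * (exp (-x*u) - q3 x u)\<bar> \<le> \<bar>1\<bar> * x^3 * exp x * u^3 / 6"
    using T[of x 1] assms by simp
  have "\<bar>Nf x a u\<bar> \<le> \<bar>Pc x a - (x-1)\<bar> * a^3 * exp a * u^3 / 6 + \<bar>Pc x a\<bar> * (2*a)^3 * exp (2*a) * u^3 / 6
     + \<bar>x-1-Pc x a\<bar> * (a+1)^3 * exp (a+1) * u^3 / 6 + \<bar>Pc x a\<bar> * (2*a+1)^3 * exp (2*a+1) * u^3 / 6
     + \<bar>1\<bar> * 1^3 * exp 1 * u^3 / 6 + \<bar>1\<bar> * x^3 * exp x * u^3 / 6"
    unfolding Nf_taylor[OF assms(1)] by (rule order_trans[OF abs6]) (intro add_mono 1 2 3 4 5 6)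
  also have "\<dots> = Mc x a * u^3" unfolding Mc_def by (simp add: field_simps)
  finally show ?thesis .
qed

lemma Nf_large:
  assumes "a > 0" "x > 0" "0 \<le> u"
  shows "\<bar>Nf x a u\<bar> \<le> (\<bar>Pc x a - (x-1)\<bar> + \<bar>Pc x a\<bar> + \<bar>x-1-Pc x a\<bar> + \<bar>Pc x a\<bar> + 1 + 1) * exp (- min a (min 1 x) * u)"
proof -
  define m where "m = min a (min 1 x)"
  have E: "exp (-l*u) \<le> exp (-m*u)" if "l \<ge> m" for l
    using that assms by (simp add: mult_right_mono)
  have B: "\<bar>c * exp (-l*u)\<bar> \<le> \<bar>c\<bar> * exp (-m*u)" if "l \<ge> m" for c l
    using E[OF that] by (simp add: abs_mult mult_left_mono)
  have m: "a \<ge> m" "2*a \<ge> m" "a+1 \<ge> m" "2*a+1 \<ge> m" "1 \<ge> m" "x \<ge> m"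
    using assms unfolding m_def by auto
  show ?thesis unfolding Nf_def m_def[symmetric] distrib_right
    by (rule order_trans[OF abs6]) (intro add_mono B m, insert B[OF m(5), of 1] B[OF m(6), of 1], auto)
qed



definition gI :: "real \<Rightarrow> real \<Rightarrow> real \<Rightarrow> real" where
  "gI x \<alpha> u = exp (-\<alpha>*u) / u *
      ((x - 1) * (x - 2*\<alpha>) / (2*\<alpha>) - (x - 1) / (1 - exp (-\<alpha>*u))
       + (exp (-(1-\<alpha>)*u) - exp (-(x-\<alpha>)*u)) / ((1 - exp (-u)) * (1 - exp (-\<alpha>*u))))"

lemma lnG_gI: "lnG x \<alpha> = integral {0<..} (gI x \<alpha>)"
  unfolding lnG_def gI_def[abs_def] by simp

lemma alg1:
  fixes A B X u P x :: real
  assumes "A > 0" "A \<noteq> 1" "B \<noteq> 1" "u \<noteq> 0"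
  shows "A/u*(P - (x-1)/(1-A) + (B/A - X/A)/((1-B)*(1-A)))
     = ((P-(x-1))*A - P*(A*A) + (x-1-P)*(A*B) + P*(A*A*B) + 1*B - 1*X)/(u*(1-A)*(1-B))"
proof -
  have a: "1 - A \<noteq> 0" and b: "1 - B \<noteq> 0" using assms by auto
  have d: "u*(1-A)*(1-B) \<noteq> 0" using a b assms by simp
  have 1: "(x-1)/(1-A)*(1-A) = x-1" using a by simp
  have D: "(1-B)*(1-A) \<noteq> 0" using a b by simp
  have 2: "Q/((1-B)*(1-A))*((1-A)*(1-B)) = Q" for Q
    using D by (simp add: mult.commute[of "1-A" "1-B"])
  have 3: "A*(B/A - X/A) = B - X" using assms by (simp add: right_diff_distrib)
  have gen: "A/u*(P - T1 + T2) * (u*(1-A)*(1-B))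
      = A*(P*((1-A)*(1-B)) - T1*(1-A)*(1-B) + T2*((1-A)*(1-B)))" for T1 T2
    using assms(4) by (simp add: field_simps)
  have "A/u*(P - (x-1)/(1-A) + (B/A - X/A)/((1-B)*(1-A))) * (u*(1-A)*(1-B))
      = A*(P*((1-A)*(1-B)) - (x-1)/(1-A)*(1-A)*(1-B) + (B/A - X/A)/((1-B)*(1-A))*((1-A)*(1-B)))"
    by (rule gen)
  also have "\<dots> = A*(P*((1-A)*(1-B)) - (x-1)*(1-B)) + A*(B/A - X/A)" unfolding 1 2 by (simp add: algebra_simps)
  also have "\<dots> = (P-(x-1))*A - P*(A*A) + (x-1-P)*(A*B) + P*(A*A*B) + 1*B - 1*X" unfolding 3 by (simp add: algebra_simps)
  finally show ?thesis using d by (simp add: eq_divide_eq)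
qed

lemma gI_Nf:
  assumes "a > 0" "u > 0"
  shows "gI x a u = Nf x a u / (u*(1-exp(-a*u))*(1-exp(-u)))"
proof -
  have e1: "exp (-(1-a)*u) = exp(-u)/exp(-a*u)" by (subst exp_diff[symmetric]) (simp add: algebra_simps)
  have e2: "exp (-(x-a)*u) = exp(-x*u)/exp(-a*u)" by (subst exp_diff[symmetric]) (simp add: algebra_simps)
  have e3: "exp (-(2*a)*u) = exp(-a*u)*exp(-a*u)" by (subst exp_add[symmetric]) (simp add: algebra_simps)
  have e4: "exp (-(a+1)*u) = exp(-a*u)*exp(-1*u)" by (subst exp_add[symmetric]) (simp add: algebra_simps)
  have e5: "exp (-(2*a+1)*u) = exp(-a*u)*exp(-a*u)*exp(-1*u)"
    by (subst exp_add[symmetric])+ (simp add: algebra_simps)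
  have A1: "exp (-a*u) \<noteq> 1" "exp (-u) \<noteq> 1" using assms by auto
  show ?thesis unfolding gI_def Nf_def Pc_def[symmetric] e1 e2 e3 e4 e5
    using alg1[OF exp_gt_zero A1 _, of u "Pc x a" x "exp(-x*u)"] assms by simp
qed



lemma gI_bound:
  assumes a: "a > 0" and x: "x > 0"
  shows "\<exists>K. \<forall>u>0. \<bar>gI x a u\<bar> \<le> K * exp (- min a (min 1 x) * u)"
proof -
  define m where "m = min a (min 1 x)"
  have m0: "m > 0" "m \<le> 1" using a x unfolding m_def by auto
  define S where "S = \<bar>Pc x a - (x-1)\<bar> + \<bar>Pc x a\<bar> + \<bar>x-1-Pc x a\<bar> + \<bar>Pc x a\<bar> + 1 + 1"
  define d where "d = (1 - exp (-a)) * (1 - exp (-1::real))"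
  have d0: "d > 0" unfolding d_def using a by (intro mult_pos_pos) auto
  define K1 where "K1 = Mc x a * exp (a+1) / a"
  have "\<bar>Nf x a 1\<bar> \<le> Mc x a" using Nf_small[OF a x, of 1] by simp
  hence Mc0: "Mc x a \<ge> 0" by (meson abs_ge_zero order_trans)
  have K10: "K1 \<ge> 0" unfolding K1_def using Mc0 a by simp
  have S0: "S \<ge> 0" unfolding S_def by simp
  have "\<exists>K. \<forall>u>0. \<bar>gI x a u\<bar> \<le> K * exp (- m * u)"
  proof (intro exI[of _ "K1 * exp m + S / d"] allI impI)
    fix u :: real assume u: "u > 0"
    define D where "D = u*(1-exp(-a*u))*(1-exp(-u))"
    have g: "gI x a u = Nf x a u / D" unfolding D_def by (rule gI_Nf[OF a u])
    have D0: "D > 0" unfolding D_def using u a by (intro mult_pos_pos) auto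
    have gabs: "\<bar>gI x a u\<bar> = \<bar>Nf x a u\<bar> / D" using g D0 by simp
    show "\<bar>gI x a u\<bar> \<le> (K1 * exp m + S / d) * exp (- m * u)"
    proof (cases "u \<le> 1")
      case True
      have l1: "a*u*exp(-a) \<le> 1 - exp(-a*u)"
      proof -
        have "exp (-a) \<le> exp (-(a*u))" using True a u by (simp add: mult_left_le)
        hence "a*u*exp(-a) \<le> a*u*exp(-(a*u))" using a u by (intro mult_left_mono) auto
        also have "\<dots> \<le> 1 - exp(-(a*u))" using one_minus_exp_lower[of "a*u"] a u by simp
        finally show ?thesis by simp
      qed
      have l2: "u*exp(-1) \<le> 1 - exp(-u)"
      proof -
        have "exp (-1) \<le> exp (-u)" using True by simp
        hence "u*exp(-1) \<le> u*exp(-u)" using u by (intro mult_left_mono) auto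
        also have "\<dots> \<le> 1 - exp(-u)" using one_minus_exp_lower[of u] u by simp
        finally show ?thesis .
      qed
      have "u * (a*u*exp(-a)) * (u*exp(-1)) \<le> D" unfolding D_def
        using l1 l2 u a by (intro mult_mono) auto
      hence "a * u^3 * exp(-(a+1)) \<le> D"
        by (simp add: power3_eq_cube exp_diff[symmetric] exp_add[symmetric] algebra_simps mult_exp_exp)
      hence h1: "K1 * (a * u^3 * exp(-(a+1))) \<le> K1 * D" using K10 by (rule mult_left_mono)
      have h2: "K1 * (a * u^3 * exp(-(a+1))) = Mc x a * u^3"
      proof -
        have "exp (a+1) * exp(-(a+1)) = 1" by (simp flip: exp_add)
        thus ?thesis unfolding K1_def using a by (simp add: field_simps)
      qed
      have h3: "\<bar>Nf x a u\<bar> \<le> Mc x a * u^3" using Nf_small[OF a x _ True] u by simp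
      have "\<bar>Nf x a u\<bar> \<le> K1 * D" using h1 h2 h3 by linarith
      hence "\<bar>gI x a u\<bar> \<le> K1" using gabs D0 by (simp add: pos_divide_le_eq)
      also have "K1 \<le> K1 * exp m * exp (-m*u)"
      proof -
        have "exp m * exp (-m*u) = exp (m*(1-u))" by (simp add: mult_exp_exp algebra_simps)
        moreover have "exp (m*(1-u)) \<ge> 1" using True m0 by simp
        ultimately show ?thesis using K10 by (simp add: mult.assoc mult_le_cancel_left1)
      qed
      also have "\<dots> \<le> (K1 * exp m + S / d) * exp (- m * u)"
        using S0 d0 by (intro mult_right_mono) auto
      finally show ?thesis .
    next
      case False
      have "d \<le> D"
      proof -
        have "1 - exp(-a) \<le> 1 - exp(-a*u)" using False a by simp
        moreover have "1 - exp(-1) \<le> 1 - exp(-u)" using False by simp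
        ultimately have "d \<le> (1 - exp(-a*u)) * (1 - exp(-u))" unfolding d_def
          using a by (intro mult_mono) auto
        also have "\<dots> \<le> D"
        proof -
          have "0 \<le> (1 - exp(-a*u)) * (1 - exp(-u))" using a u by (intro mult_nonneg_nonneg) auto
          hence "1 * ((1 - exp(-a*u)) * (1 - exp(-u))) \<le> u * ((1 - exp(-a*u)) * (1 - exp(-u)))"
            using False by (intro mult_right_mono) auto
          thus ?thesis unfolding D_def by (simp only: mult.assoc mult_1)
        qed
        finally show ?thesis .
      qed
      have N: "\<bar>Nf x a u\<bar> \<le> S * exp (- m*u)"
        using Nf_large[OF a x] u unfolding S_def m_def by simp
      have "\<bar>gI x a u\<bar> \<le> S * exp (-m*u) / d"
      proof -
        have "\<bar>Nf x a u\<bar> / D \<le> \<bar>Nf x a u\<bar> / d"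
          using \<open>d \<le> D\<close> d0 by (intro divide_left_mono) auto
        also have "\<dots> \<le> S * exp (-m*u) / d" using N d0 by (intro divide_right_mono) auto
        finally show ?thesis unfolding gabs .
      qed
      also have "\<dots> \<le> (K1 * exp m + S / d) * exp (- m * u)"
        using K10 by (simp add: algebra_simps)
      finally show ?thesis .
    qed
  qed
  thus ?thesis unfolding m_def .
qed

lemma gI_cont: "a > 0 \<Longrightarrow> continuous_on {0<..} (gI x a)"
  unfolding gI_def[abs_def] by (intro continuous_intros) auto

lemma gI_absint:
  assumes "a > 0" "x > 0"
  shows "gI x a absolutely_integrable_on {0<..}"
proof -
  obtain K where K: "\<forall>u>0. \<bar>gI x a u\<bar> \<le> K * exp (- min a (min 1 x) * u)"
    using gI_bound[OF assms] by blast
  show ?thesis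
    by (rule abs_int_exp_bound[of "{0<..}" "gI x a" 0 "min a (min 1 x)" K])
       (use K assms gI_cont[OF assms(1)] in auto)
qed



lemma alg2:
  fixes N1 N2 N3 A B t c x \<alpha> :: real
  assumes "t \<noteq> 0" "A \<noteq> 1" "B \<noteq> 1" "\<alpha> \<noteq> 0" "N1 = N2 - x*N3 + c*(B-A)*(1-A)*(1-B)"
  shows "\<alpha> * (N1 / (\<alpha>*t*(1-B)*(1-A))) = N2/(t*(1-A)*(1-B)) - x*(N3/(t*(1-A)*(1-B))) + c*((B-A)/t)"
proof -
  have a: "1 - A \<noteq> 0" and b: "1 - B \<noteq> 0" using assms by auto
  define D where "D = t*(1-A)*(1-B)"
  have D0: "D \<noteq> 0" unfolding D_def using a b assms(1) by simp
  have 1: "\<alpha> * (N1 / (\<alpha>*t*(1-B)*(1-A))) = N1 / D" unfolding D_def using assms(4)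
    by (simp add: mult_ac)
  have 2: "c*(B-A)*(1-A)*(1-B) / D = c*((B-A)/t)" unfolding D_def using a b
    by (simp add: mult_ac)
  have "N1 / D = N2/D - x*(N3/D) + c*(B-A)*(1-A)*(1-B) / D"
    unfolding assms(5) by (simp add: diff_divide_distrib add_divide_distrib)
  thus ?thesis unfolding 1 2 D_def[symmetric] by simp
qed

lemma pointwise:
  assumes a: "\<alpha> > 0" and t: "t > 0"
  shows "\<alpha> * gI x (1/\<alpha>) (\<alpha>*t) = gI (\<alpha>*x) \<alpha> t - x * gI \<alpha> \<alpha> t
           + ((x-1)*(\<alpha>*x-2)/2) * ((exp (-t) - exp (-\<alpha>*t)) / t)"
proof -
  define A where "A = exp (-\<alpha>*t)"
  define B where "B = exp (-t)"
  define C where "C = exp (-(\<alpha>*x)*t)"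
  have Pc1: "Pc x (1/\<alpha>) = (x-1)*(\<alpha>*x-2)/2" unfolding Pc_def using a by (simp add: field_simps)
  have Pc2: "Pc (\<alpha>*x) \<alpha> = (\<alpha>*x-1)*(x-2)/2" unfolding Pc_def using a by (simp add: field_simps)
  have Pc3: "Pc \<alpha> \<alpha> = -(\<alpha>-1)/2" unfolding Pc_def using a by (simp add: field_simps)
  have r1: "exp (-(1/\<alpha>)*(\<alpha>*t)) = B" "exp (-(2*(1/\<alpha>))*(\<alpha>*t)) = B*B"
    "exp (-(1/\<alpha>+1)*(\<alpha>*t)) = B*A" "exp (-(2*(1/\<alpha>)+1)*(\<alpha>*t)) = B*B*A"
    "exp (-1*(\<alpha>*t)) = A" "exp (-x*(\<alpha>*t)) = C" "exp (-(\<alpha>*t)) = A"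
    unfolding A_def B_def C_def using a by (simp_all flip: exp_add add: algebra_simps)
  have r2: "exp (-\<alpha>*t) = A" "exp (-(2*\<alpha>)*t) = A*A" "exp (-(\<alpha>+1)*t) = A*B"
    "exp (-(2*\<alpha>+1)*t) = A*A*B" "exp (-1*t) = B" "exp (-(\<alpha>*x)*t) = C"
    unfolding A_def B_def C_def using a by (simp_all flip: exp_add add: algebra_simps)
  have g1: "gI x (1/\<alpha>) (\<alpha>*t) = Nf x (1/\<alpha>) (\<alpha>*t) / (\<alpha>*t*(1-B)*(1-A))"
    using gI_Nf[of "1/\<alpha>" "\<alpha>*t" x] a t r1 by simp
  have g2: "gI (\<alpha>*x) \<alpha> t = Nf (\<alpha>*x) \<alpha> t / (t*(1-A)*(1-B))"
    using gI_Nf[of \<alpha> t "\<alpha>*x"] a t unfolding A_def B_def by simp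
  have g3: "gI \<alpha> \<alpha> t = Nf \<alpha> \<alpha> t / (t*(1-A)*(1-B))"
    using gI_Nf[of \<alpha> t \<alpha>] a t unfolding A_def B_def by simp
  have N1: "Nf x (1/\<alpha>) (\<alpha>*t) = (Pc x (1/\<alpha>) - (x-1))*B - Pc x (1/\<alpha>)*(B*B) + (x-1-Pc x (1/\<alpha>))*(B*A)
      + Pc x (1/\<alpha>)*(B*B*A) + 1*A - 1*C"
    unfolding Nf_def r1 ..
  have N2: "Nf (\<alpha>*x) \<alpha> t = (Pc (\<alpha>*x) \<alpha> - (\<alpha>*x-1))*A - Pc (\<alpha>*x) \<alpha>*(A*A) + (\<alpha>*x-1-Pc (\<alpha>*x) \<alpha>)*(A*B)
      + Pc (\<alpha>*x) \<alpha>*(A*A*B) + 1*B - 1*C"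
    unfolding Nf_def r2 ..
  have N3: "Nf \<alpha> \<alpha> t = (Pc \<alpha> \<alpha> - (\<alpha>-1))*A - Pc \<alpha> \<alpha>*(A*A) + (\<alpha>-1-Pc \<alpha> \<alpha>)*(A*B)
      + Pc \<alpha> \<alpha>*(A*A*B) + 1*B - 1*A"
    unfolding Nf_def r2(1-5) ..
  have key: "Nf x (1/\<alpha>) (\<alpha>*t) = Nf (\<alpha>*x) \<alpha> t - x * Nf \<alpha> \<alpha> t + ((x-1)*(\<alpha>*x-2)/2)*(B-A)*(1-A)*(1-B)"
    unfolding N1 N2 N3 Pc1 Pc2 Pc3 by (simp add: field_simps)
  have A1: "A \<noteq> 1" "B \<noteq> 1" unfolding A_def B_def using a t by auto
  show ?thesis unfolding g1 g2 g3 B_def[symmetric] A_def[symmetric]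
    by (rule alg2[OF _ A1 _ key]) (use a t in auto)
qed



lemma exp_lip:
  fixes y z :: real assumes "y \<le> 0" "z \<le> 0"
  shows "\<bar>exp y - exp z\<bar> \<le> \<bar>y - z\<bar>"
proof -
  have *: "exp y - exp z \<le> y - z" if "z \<le> y" "y \<le> 0" for y z :: real
  proof -
    have "1 + (z - y) \<le> exp (z - y)" by (rule exp_ge_add_one_self)
    hence "1 - exp (z - y) \<le> y - z" by linarith
    moreover have "0 \<le> 1 - exp (z - y)" using that by simp
    moreover have "exp y \<le> 1" using that by simp
    ultimately have "exp y * (1 - exp (z - y)) \<le> y - z"
      by (metis mult_left_le_one_le exp_ge_zero order_trans)
    thus ?thesis by (simp add: algebra_simps exp_diff)
  qed
  show ?thesis
  proof (cases "z \<le> y")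
    case True thus ?thesis using *[OF True assms(1)] by simp
  next
    case False thus ?thesis using *[of y z] assms by simp
  qed
qed

lemma h_bound:
  fixes t \<alpha> :: real assumes "t \<ge> 0" "\<alpha> > 0"
  shows "\<bar>exp (-t) - exp (-\<alpha>*t)\<bar> \<le> \<bar>\<alpha>-1\<bar> * t"
proof -
  have "\<bar>exp (-t) - exp (-\<alpha>*t)\<bar> \<le> \<bar>-t - -\<alpha>*t\<bar>" using assms by (intro exp_lip) auto
  also have "-t - -\<alpha>*t = (\<alpha>-1)*t" by (simp add: algebra_simps)
  hence "\<bar>-t - -\<alpha>*t\<bar> = \<bar>\<alpha>-1\<bar> * t" using assms by (simp add: abs_mult)
  finally show ?thesis .
qed

lemma E_absint:
  fixes p :: real
  assumes p: "p > 0"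
  shows "(\<lambda>t. exp (-t) / t) absolutely_integrable_on {p..}"
proof (rule abs_int_exp_bound[where S="{p..}" and c=p and m=1 and K="1/p"])
  show "continuous_on {p..} (\<lambda>t. exp (- t) / t)" using p by (intro continuous_intros) auto
  fix t assume "t \<in> {p..}"
  hence t: "t \<ge> p" by simp
  have "exp (-t) / t \<le> exp (-t) / p" using t p by (intro divide_left_mono) auto
  thus "\<bar>exp (- t) / t\<bar> \<le> 1 / p * exp (- 1 * t)" using t p by simp
qed auto

lemma ln_has_int:
  fixes p q :: real
  assumes "0 < p" "p \<le> q"
  shows "((\<lambda>t. 1/t) has_integral (ln q - ln p)) {p..q}"
proof (rule fundamental_theorem_of_calculus[OF assms(2)])
  fix t assume "t \<in> {p..q}"
  hence "t > 0" using assms by auto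
  thus "(ln has_vector_derivative 1/t) (at t within {p..q})"
    by (auto intro!: has_field_derivative_at_within DERIV_ln_divide
        simp flip: has_real_derivative_iff_has_vector_derivative)
qed

lemma E_between:
  fixes p q :: real
  assumes "0 < p" "p \<le> q"
  shows "exp (-q) * (ln q - ln p) \<le> integral {p..q} (\<lambda>t. exp (-t) / t)"
    "integral {p..q} (\<lambda>t. exp (-t) / t) \<le> ln q - ln p"
proof -
  have int: "(\<lambda>t. exp (-t) / t) integrable_on {p..q}"
    using assms by (intro integrable_continuous_interval continuous_intros) auto
  have l: "((\<lambda>t. exp (-q) * (1/t)) has_integral exp (-q) * (ln q - ln p)) {p..q}"
    by (intro has_integral_mult_right ln_has_int assms)
  show "exp (-q) * (ln q - ln p) \<le> integral {p..q} (\<lambda>t. exp (-t) / t)"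
  proof (rule has_integral_le[OF l integrable_integral[OF int]])
    fix t assume "t \<in> {p..q}"
    hence "t > 0" "t \<le> q" using assms by auto
    thus "exp (-q) * (1/t) \<le> exp (-t) / t" by (simp add: divide_right_mono)
  qed
  show "integral {p..q} (\<lambda>t. exp (-t) / t) \<le> ln q - ln p"
  proof (rule has_integral_le[OF integrable_integral[OF int] ln_has_int[OF assms]])
    fix t assume "t \<in> {p..q}"
    hence "t > 0" using assms by auto
    thus "exp (-t) / t \<le> 1/t" by (simp add: divide_right_mono)
  qed
qed

lemma E_split:
  fixes p q :: real
  assumes "0 < p" "p \<le> q"
  shows "integral {p..} (\<lambda>t. exp (-t) / t) = integral {p..q} (\<lambda>t. exp (-t) / t) + integral {q..} (\<lambda>t. exp (-t) / t)"
proof -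
  have "{p..} = {p..q} \<union> {q..}" using assms by auto
  moreover have "negligible ({p..q} \<inter> {q..})"
    by (rule negligible_subset[of "{q}"]) auto
  moreover have "(\<lambda>t. exp (-t) / t) integrable_on {p..q}"
    using assms by (intro integrable_continuous_interval continuous_intros) auto
  moreover have "(\<lambda>t. exp (-t) / t) integrable_on {q..}"
    using E_absint[of q] assms set_lebesgue_integral_eq_integral(1) by auto
  ultimately show ?thesis by simp
qed



lemma scale_E:
  fixes \<alpha> \<epsilon> :: real
  assumes a: "\<alpha> > 0" and e: "\<epsilon> > 0"
  shows "(\<lambda>t. exp (-\<alpha>*t) / t) absolutely_integrable_on {\<epsilon>..} \<and>
         integral {\<epsilon>..} (\<lambda>t. exp (-\<alpha>*t) / t) = integral {\<alpha>*\<epsilon>..} (\<lambda>t. exp (-t) / t)"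
proof -
  have img: "(\<lambda>t. \<alpha>*t) ` {\<epsilon>..} = {\<alpha>*\<epsilon>..}"
  proof
    show "(\<lambda>t. \<alpha>*t) ` {\<epsilon>..} \<subseteq> {\<alpha>*\<epsilon>..}" using a by auto
    show "{\<alpha>*\<epsilon>..} \<subseteq> (\<lambda>t. \<alpha>*t) ` {\<epsilon>..}"
    proof
      fix y assume "y \<in> {\<alpha>*\<epsilon>..}"
      hence "y/\<alpha> \<in> {\<epsilon>..}" "y = \<alpha>*(y/\<alpha>)" using a by (auto simp: field_simps)
      thus "y \<in> (\<lambda>t. \<alpha>*t) ` {\<epsilon>..}" by blast
    qed
  qed
  have cv: "(\<lambda>x. \<bar>\<alpha>\<bar> * (exp (-(\<alpha>*x)) / (\<alpha>*x))) absolutely_integrable_on {\<epsilon>..} \<and>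
           integral {\<epsilon>..} (\<lambda>x. \<bar>\<alpha>\<bar> * (exp (-(\<alpha>*x)) / (\<alpha>*x))) = integral {\<alpha>*\<epsilon>..} (\<lambda>t. exp (-t) / t)"
    using has_absolute_integral_change_of_variables_1'[of "{\<epsilon>..}" "\<lambda>t. \<alpha>*t" "\<lambda>_. \<alpha>"
        "\<lambda>t. exp (-t) / t" "integral {\<alpha>*\<epsilon>..} (\<lambda>t. exp (-t) / t)"] a e E_absint[of "\<alpha>*\<epsilon>"]
    unfolding img
    by (auto intro!: derivative_eq_intros simp: inj_on_def)
  have eq: "(\<lambda>x. \<bar>\<alpha>\<bar> * (exp (-(\<alpha>*x)) / (\<alpha>*x))) = (\<lambda>t. exp (-\<alpha>*t) / t)"
    using a by (auto simp: fun_eq_iff)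
  show ?thesis using cv unfolding eq .
qed

lemma frullani:
  fixes \<alpha> :: real
  assumes a: "\<alpha> > 0"
  shows "((\<lambda>t. (exp (-t) - exp (-\<alpha>*t)) / t) has_integral ln \<alpha>) {0<..}"
proof -
  define h where "h = (\<lambda>t::real. (exp (-t) - exp (-\<alpha>*t)) / t)"
  define E where "E = (\<lambda>t::real. exp (-t) / t)"
  define m where "m = min 1 \<alpha>"
  have m: "m > 0" "m \<le> 1" "m \<le> \<alpha>" using a unfolding m_def by auto
  have hb: "\<bar>h t\<bar> \<le> \<bar>\<alpha>-1\<bar>" if "t > 0" for t
  proof -
    have "\<bar>h t\<bar> = \<bar>exp (-t) - exp (-\<alpha>*t)\<bar> / t" unfolding h_def using that by simp
    also have "\<dots> \<le> \<bar>\<alpha>-1\<bar> * t / t" using h_bound[of t \<alpha>] that a by (intro divide_right_mono) auto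
    finally show ?thesis using that by simp
  qed
  have habs: "h absolutely_integrable_on {0<..}"
  proof (rule abs_int_exp_bound[where S="{0<..}" and c=0 and m=m and K="\<bar>\<alpha>-1\<bar> * exp m + 2"])
    show "continuous_on {0<..} h" unfolding h_def by (intro continuous_intros) auto
    fix t :: real assume "t \<in> {0<..}"
    hence t: "t > 0" by simp
    show "\<bar>h t\<bar> \<le> (\<bar>\<alpha>-1\<bar> * exp m + 2) * exp (-m*t)"
    proof (cases "t \<le> 1")
      case True
      have "exp m * exp (-m*t) = exp (m*(1-t))" by (simp add: mult_exp_exp algebra_simps)
      moreover have "exp (m*(1-t)) \<ge> 1" using True m by simp
      ultimately have "\<bar>\<alpha>-1\<bar> \<le> \<bar>\<alpha>-1\<bar> * exp m * exp (-m*t)"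
        by (simp add: mult.assoc mult_le_cancel_left1)
      also have "\<dots> \<le> (\<bar>\<alpha>-1\<bar> * exp m + 2) * exp (-m*t)" by (intro mult_right_mono) auto
      finally show ?thesis using hb[OF t] by linarith
    next
      case False
      have "\<bar>h t\<bar> = \<bar>exp (-t) - exp (-\<alpha>*t)\<bar> / t" unfolding h_def using t by simp
      also have "\<dots> \<le> \<bar>exp (-t) - exp (-\<alpha>*t)\<bar>"
      proof -
        have "\<bar>exp (-t) - exp (-\<alpha>*t)\<bar> * 1 \<le> \<bar>exp (-t) - exp (-\<alpha>*t)\<bar> * t"
          using False by (intro mult_left_mono) auto
        thus ?thesis using t by (simp add: divide_le_eq)
      qed
      also have "\<dots> \<le> exp (-t) + exp (-\<alpha>*t)"
        using exp_gt_zero[of "-t"] exp_gt_zero[of "-\<alpha>*t"] by linarith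
      also have "\<dots> \<le> exp (-m*t) + exp (-m*t)"
        using m t by (intro add_mono) (auto simp: mult_right_mono)
      also have "\<dots> \<le> (\<bar>\<alpha>-1\<bar> * exp m + 2) * exp (-m*t)" by (simp add: algebra_simps)
      finally show ?thesis .
    qed
  qed (use m in auto)
  define I where "I = integral {0<..} h"
  have bnd: "\<bar>I - ln \<alpha>\<bar> \<le> (\<bar>\<alpha>-1\<bar> + \<bar>ln \<alpha>\<bar> * (1+\<alpha>)) * \<epsilon>" if e: "\<epsilon> > 0" for \<epsilon>
  proof -
    have h1: "h absolutely_integrable_on {0<..\<epsilon>}"
      by (rule set_integrable_subset[OF habs]) auto
    have h2: "h absolutely_integrable_on {\<epsilon>..}"
      by (rule set_integrable_subset[OF habs]) (use e in auto)
    have "I = integral ({0<..\<epsilon>} \<union> {\<epsilon>..}) h"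
      unfolding I_def using e by (intro arg_cong[where f="\<lambda>S. integral S h"]) auto
    also have "\<dots> = integral {0<..\<epsilon>} h + integral {\<epsilon>..} h"
      using h1 h2 set_lebesgue_integral_eq_integral(1)
      by (intro integral_Un) (auto intro: negligible_subset[of "{\<epsilon>}"])
    finally have I1: "I = integral {0<..\<epsilon>} h + integral {\<epsilon>..} h" .
    have cst: "((\<lambda>_. c) has_integral \<epsilon> * c) {0<..\<epsilon>}" for c :: real
    proof -
      have "((\<lambda>_. c) has_integral \<epsilon> * c) {0..\<epsilon>}" using has_integral_const_real[of c 0 \<epsilon>] e by simp
      thus ?thesis by (rule has_integral_spike_set_eq[THEN iffD1, rotated -1])
                      (auto intro: negligible_subset[of "{0}"])
    qed
    have hi1: "(h has_integral integral {0<..\<epsilon>} h) {0<..\<epsilon>}"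
      using h1 set_lebesgue_integral_eq_integral(1) by blast
    have s1: "integral {0<..\<epsilon>} h \<le> \<epsilon> * \<bar>\<alpha>-1\<bar>"
      by (rule has_integral_le[OF hi1 cst]) (use hb in force)
    have s2: "\<epsilon> * (-\<bar>\<alpha>-1\<bar>) \<le> integral {0<..\<epsilon>} h"
      by (rule has_integral_le[OF cst hi1]) (use hb in force)
    have Ee: "E absolutely_integrable_on {\<epsilon>..}" unfolding E_def using E_absint e by blast
    obtain sc where sc1: "(\<lambda>t. exp (-\<alpha>*t) / t) absolutely_integrable_on {\<epsilon>..}"
      and sc2: "integral {\<epsilon>..} (\<lambda>t. exp (-\<alpha>*t) / t) = integral {\<alpha>*\<epsilon>..} E"
      using scale_E[OF a e] unfolding E_def by blast
    have "integral {\<epsilon>..} h = integral {\<epsilon>..} (\<lambda>t. E t - exp (-\<alpha>*t) / t)"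
      unfolding h_def E_def by (simp add: diff_divide_distrib)
    also have "\<dots> = integral {\<epsilon>..} E - integral {\<epsilon>..} (\<lambda>t. exp (-\<alpha>*t) / t)"
      using Ee sc1 set_lebesgue_integral_eq_integral(1) by (intro integral_diff) auto
    finally have I2: "integral {\<epsilon>..} h = integral {\<epsilon>..} E - integral {\<alpha>*\<epsilon>..} E" using sc2 by simp
    have ln1: "ln (\<alpha>*\<epsilon>) - ln \<epsilon> = ln \<alpha>" using a e by (simp add: ln_mult)
    have ln2: "ln \<epsilon> - ln (\<alpha>*\<epsilon>) = - ln \<alpha>" using ln1 by linarith
    have ex2: "1 - exp (-(1+\<alpha>)*\<epsilon>) \<le> (1+\<alpha>)*\<epsilon>"
      using exp_ge_add_one_self[of "-(1+\<alpha>)*\<epsilon>"] by linarith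
    have D: "\<bar>(integral {\<epsilon>..} E - integral {\<alpha>*\<epsilon>..} E) - ln \<alpha>\<bar> \<le> \<bar>ln \<alpha>\<bar> * (1 - exp (-(1+\<alpha>)*\<epsilon>))"
    proof (cases "\<alpha> \<ge> 1")
      case True
      have le: "\<epsilon> \<le> \<alpha>*\<epsilon>" using True e by simp
      have sp: "integral {\<epsilon>..} E = integral {\<epsilon>..\<alpha>*\<epsilon>} E + integral {\<alpha>*\<epsilon>..} E"
        unfolding E_def by (rule E_split[OF e le])
      have b1: "exp (-(\<alpha>*\<epsilon>)) * ln \<alpha> \<le> integral {\<epsilon>..\<alpha>*\<epsilon>} E"
        using E_between(1)[OF e le] ln1 unfolding E_def by simp
      have b2: "integral {\<epsilon>..\<alpha>*\<epsilon>} E \<le> ln \<alpha>"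
        using E_between(2)[OF e le] ln1 unfolding E_def by simp
      have "exp (-(1+\<alpha>)*\<epsilon>) \<le> exp (-(\<alpha>*\<epsilon>))" using e by (simp add: algebra_simps)
      hence "exp (-(1+\<alpha>)*\<epsilon>) * ln \<alpha> \<le> exp (-(\<alpha>*\<epsilon>)) * ln \<alpha>"
        using True by (intro mult_right_mono) auto
      moreover have "ln \<alpha> \<ge> 0" using True by simp
      ultimately show ?thesis using sp b1 b2 by (simp add: algebra_simps)
    next
      case False
      have le: "\<alpha>*\<epsilon> \<le> \<epsilon>" using False e by simp
      have ae: "\<alpha>*\<epsilon> > 0" using a e by simp
      have sp: "integral {\<alpha>*\<epsilon>..} E = integral {\<alpha>*\<epsilon>..\<epsilon>} E + integral {\<epsilon>..} E"
        unfolding E_def by (rule E_split[OF ae le])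
      have b1: "exp (-\<epsilon>) * (- ln \<alpha>) \<le> integral {\<alpha>*\<epsilon>..\<epsilon>} E"
        using E_between(1)[OF ae le] ln2 unfolding E_def by simp
      have b2: "integral {\<alpha>*\<epsilon>..\<epsilon>} E \<le> - ln \<alpha>"
        using E_between(2)[OF ae le] ln2 unfolding E_def by simp
      have "exp (-(1+\<alpha>)*\<epsilon>) \<le> exp (-\<epsilon>)" using e a by (simp add: algebra_simps)
      hence "exp (-(1+\<alpha>)*\<epsilon>) * (- ln \<alpha>) \<le> exp (-\<epsilon>) * (- ln \<alpha>)"
        using False a by (intro mult_right_mono) auto
      moreover have "ln \<alpha> \<le> 0" using False a by simp
      ultimately show ?thesis using sp b1 b2 by (simp add: algebra_simps)
    qed
    have "\<bar>ln \<alpha>\<bar> * (1 - exp (-(1+\<alpha>)*\<epsilon>)) \<le> \<bar>ln \<alpha>\<bar> * ((1+\<alpha>)*\<epsilon>)"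
      using ex2 by (intro mult_left_mono) auto
    hence "\<bar>I - ln \<alpha>\<bar> \<le> \<epsilon> * \<bar>\<alpha>-1\<bar> + \<bar>ln \<alpha>\<bar> * ((1+\<alpha>)*\<epsilon>)"
      using I1 I2 D s1 s2 by linarith
    thus ?thesis by (simp add: algebra_simps)
  qed
  have "I = ln \<alpha>"
  proof (rule ccontr)
    assume ne: "I \<noteq> ln \<alpha>"
    define C where "C = \<bar>\<alpha>-1\<bar> + \<bar>ln \<alpha>\<bar> * (1+\<alpha>)"
    have C0: "C \<ge> 0" unfolding C_def using a by simp
    define \<epsilon> where "\<epsilon> = \<bar>I - ln \<alpha>\<bar> / (C + 1)"
    have e0: "\<epsilon> > 0" unfolding \<epsilon>_def using ne C0 by simp
    have "\<bar>I - ln \<alpha>\<bar> \<le> C * \<epsilon>" using bnd[OF e0] unfolding C_def .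
    also have "C * \<epsilon> < (C+1) * \<epsilon>" using e0 by simp
    also have "(C+1) * \<epsilon> = \<bar>I - ln \<alpha>\<bar>" unfolding \<epsilon>_def using C0 by simp
    finally show False by simp
  qed
  moreover have "(h has_integral I) {0<..}"
    unfolding I_def using habs set_lebesgue_integral_eq_integral(1) by blast
  ultimately show ?thesis unfolding h_def by simp
qed



theorem mainTheorem13:
  fixes \<alpha> x :: real
  assumes "\<alpha> > 0" and "x > 0"
  shows "G x (1/\<alpha>) = G (\<alpha>*x) \<alpha> / (G \<alpha> \<alpha>) powr x * \<alpha> powr ((x - 1) * (\<alpha>*x - 2) / 2)"
proof -
  note a = assms(1) and xp = assms(2)
  define c where "c = (x - 1) * (\<alpha>*x - 2) / 2"
  define L1 where "L1 = lnG x (1/\<alpha>)"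
  define L2 where "L2 = lnG (\<alpha>*x) \<alpha>"
  define L3 where "L3 = lnG \<alpha> \<alpha>"
  have img: "(\<lambda>t. \<alpha>*t) ` {0<..} = {0<..}"
  proof
    show "(\<lambda>t. \<alpha>*t) ` {0<..} \<subseteq> {0<..}" using a by auto
    show "{0<..} \<subseteq> (\<lambda>t. \<alpha>*t) ` {0<..}"
    proof
      fix y :: real assume "y \<in> {0<..}"
      hence "y/\<alpha> \<in> {0<..}" "y = \<alpha>*(y/\<alpha>)" using a by auto
      thus "y \<in> (\<lambda>t. \<alpha>*t) ` {0<..}" by blast
    qed
  qed
  have i1: "gI x (1/\<alpha>) absolutely_integrable_on {0<..}" using gI_absint a xp by simp
  have cv: "(\<lambda>t. \<bar>\<alpha>\<bar> * gI x (1/\<alpha>) (\<alpha>*t)) absolutely_integrable_on {0<..} \<and>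
           integral {0<..} (\<lambda>t. \<bar>\<alpha>\<bar> * gI x (1/\<alpha>) (\<alpha>*t)) = L1"
    using has_absolute_integral_change_of_variables_1'[of "{0<..}" "\<lambda>t. \<alpha>*t" "\<lambda>_. \<alpha>"
        "gI x (1/\<alpha>)" L1] a i1
    unfolding img L1_def lnG_gI
    by (auto intro!: derivative_eq_intros simp: inj_on_def)
  have i2: "(gI (\<alpha>*x) \<alpha> has_integral L2) {0<..}"
    unfolding L2_def lnG_gI using gI_absint[of \<alpha> "\<alpha>*x"] a xp set_lebesgue_integral_eq_integral(1) by auto
  have i3: "(gI \<alpha> \<alpha> has_integral L3) {0<..}"
    unfolding L3_def lnG_gI using gI_absint[of \<alpha> \<alpha>] a set_lebesgue_integral_eq_integral(1) by auto
  have i4: "((\<lambda>t. (exp (-t) - exp (-\<alpha>*t)) / t) has_integral ln \<alpha>) {0<..}" by (rule frullani[OF a])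
  have sum: "((\<lambda>t. gI (\<alpha>*x) \<alpha> t - x * gI \<alpha> \<alpha> t + c * ((exp (-t) - exp (-\<alpha>*t)) / t))
       has_integral (L2 - x * L3 + c * ln \<alpha>)) {0<..}"
    by (intro has_integral_add has_integral_diff has_integral_mult_right i2 i3 i4)
  have "integral {0<..} (\<lambda>t. \<bar>\<alpha>\<bar> * gI x (1/\<alpha>) (\<alpha>*t))
      = integral {0<..} (\<lambda>t. gI (\<alpha>*x) \<alpha> t - x * gI \<alpha> \<alpha> t + c * ((exp (-t) - exp (-\<alpha>*t)) / t))"
    by (rule integral_cong) (use pointwise[OF a] a in \<open>auto simp: c_def\<close>)
  also have "\<dots> = L2 - x * L3 + c * ln \<alpha>" using sum by (rule integral_unique)
  finally have L: "L1 = L2 - x * L3 + c * ln \<alpha>" using cv by simp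
  have G0: "G \<alpha> \<alpha> > 0" unfolding G_def by simp
  have "G (\<alpha>*x) \<alpha> / (G \<alpha> \<alpha>) powr x * \<alpha> powr c = exp L2 / exp (x * L3) * exp (c * ln \<alpha>)"
    using G0 a unfolding G_def L2_def L3_def by (simp add: powr_def)
  also have "\<dots> = exp L1" unfolding L by (simp add: exp_add exp_diff)
  finally show ?thesis unfolding G_def L1_def c_def by simp
qed

end
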